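(* Let $S_1\subseteq S_2\subseteq\mathbb{Z}^k$ and $T\subseteq\mathbb{Z}^k$ be finite sets such that $S_1$ and $S_2$ have the same linear span over $\mathbb{Q}$. If $(S_1,T)$ is cancellable, then $(S_2,T)$ is cancellable.
   Context: For finite sets $S,T\subseteq\mathbb{Z}^k$, the pair $(S,T)$ is called cancellable if there exist integers $x_u\ge 1$ for $u\in S$ and $y_v\ge 0$ for $v\in T$ such that $\sum_{u\in S}x_u u+\sum_{v\in T}y_v v=0$. *)

theory Defs
  imports "HOL-Analysis.Analysis"
begin

definition cancellable :: "(int ^ 'k) set \<Rightarrow> (int ^ 'k) set \<Rightarrow> bool" where
  "cancellable S T \<longleftrightarrow>
     (\<exists>x :: int ^ 'k \<Rightarrow> int. \<exists>y :: int ^ 'k \<Rightarrow> int.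
        (\<forall>u\<in>S. x u \<ge> 1) \<and> (\<forall>v\<in>T. y v \<ge> 0) \<and>
        (\<Sum>u\<in>S. x u *s u) + (\<Sum>v\<in>T. y v *s v) = 0)"

definition rat_vec :: "int ^ 'k \<Rightarrow> rat ^ 'k" where
  "rat_vec u = (\<chi> i. of_int (u $ i))"

definition qspan :: "(int ^ 'k) set \<Rightarrow> (rat ^ 'k) set" where
  "qspan S = {w. \<exists>c :: int ^ 'k \<Rightarrow> rat. w = (\<Sum>u\<in>S. c u *s rat_vec u)}"

end

theory Submission
  imports Defs
begin

lemma rat_int_mult:
  fixes q :: rat
  shows "of_int (snd (quotient_of q)) * q \<in> \<int>"
proof -
  obtain a b where ab: "quotient_of q = (a, b)" by (cases "quotient_of q")
  have "b > 0" using quotient_of_denom_pos[OF ab] .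
  have "q = of_int a / of_int b" using quotient_of_div[OF ab] .
  then have "of_int b * q = of_int a" using \<open>b > 0\<close> by simp
  then show ?thesis using ab by simp
qed

lemma int_rel:
  assumes fin: "finite S" and h: "rat_vec w = (\<Sum>u\<in>S. c u *s rat_vec u)"
  shows "\<exists>D d. D \<ge> (1::int) \<and> D *s w = (\<Sum>u\<in>S. d u *s u)"
proof -
  define D where "D = (\<Prod>u\<in>S. snd (quotient_of (c u)))"
  have Dpos: "D > 0" unfolding D_def by (rule prod_pos) (simp add: quotient_of_denom_pos')
  have intg: "of_int D * c u \<in> \<int>" if uS: "u \<in> S" for u
  proof -
    obtain k where k: "D = snd (quotient_of (c u)) * k"
      using dvd_prodI[OF fin uS, of "\<lambda>u. snd (quotient_of (c u))"] unfolding D_def by (auto elim: dvdE)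
    have "of_int D * c u = of_int k * (of_int (snd (quotient_of (c u))) * c u)"
      using k by simp
    also have "\<dots> \<in> \<int>" by (intro Ints_mult Ints_of_int rat_int_mult)
    finally show ?thesis .
  qed
  define d where "d u = \<lfloor>of_int D * c u\<rfloor>" for u
  have dd: "(of_int (d u) :: rat) = of_int D * c u" if "u \<in> S" for u
    using intg[OF that] unfolding d_def by (metis Ints_cases floor_of_int)
  have "D *s w = (\<Sum>u\<in>S. d u *s u)"
  proof (subst vec_eq_iff, intro allI)
    fix i
    have hi: "(of_int (w $ i) :: rat) = (\<Sum>u\<in>S. c u * of_int (u $ i))"
      using arg_cong[OF h, of "\<lambda>v. v $ i"]
      by (simp add: sum_component rat_vec_def)
    have "(of_int ((D *s w) $ i) :: rat) = of_int D * (\<Sum>u\<in>S. c u * of_int (u $ i))"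
      using hi by simp
    also have "\<dots> = (\<Sum>u\<in>S. of_int (d u) * of_int (u $ i))"
      by (simp add: sum_distrib_left dd mult.assoc cong: sum.cong)
    also have "\<dots> = of_int ((\<Sum>u\<in>S. d u *s u) $ i)"
      by (simp add: sum_component)
    finally show "(D *s w) $ i = (\<Sum>u\<in>S. d u *s u) $ i" by (simp only: of_int_eq_iff)
  qed
  then show ?thesis using Dpos by (intro exI[of _ D] conjI exI[of _ d]) auto
qed

lemma step:
  assumes fin: "finite S" and wS: "w \<notin> S"
    and rel: "D \<ge> 1" "D *s w = (\<Sum>u\<in>S. d u *s u)"
    and canc: "cancellable S T"
  shows "cancellable (insert w S) T"
proof -
  obtain x y where x: "\<forall>u\<in>S. x u \<ge> 1" and y: "\<forall>v\<in>T. y v \<ge> 0"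
    and s: "(\<Sum>u\<in>S. x u *s u) + (\<Sum>v\<in>T. y v *s v) = 0"
    using canc unfolding cancellable_def by blast
  define N where "N = 1 + (\<Sum>u\<in>S. \<bar>d u\<bar>)"
  define x' where "x' u = (if u = w then D else N * x u - d u)" for u
  define y' where "y' v = N * y v" for v
  have N1: "N \<ge> 1" unfolding N_def by (simp add: sum_nonneg)
  have x'1: "\<forall>u\<in>insert w S. x' u \<ge> 1"
  proof
    fix u assume u: "u \<in> insert w S"
    show "x' u \<ge> 1"
    proof (cases "u = w")
      case True then show ?thesis using rel by (simp add: x'_def)
    next
      case False
      then have uS: "u \<in> S" using u by auto
      have "\<bar>d u\<bar> \<le> (\<Sum>u\<in>S. \<bar>d u\<bar>)"
        by (rule member_le_sum[OF uS]) (auto simp: fin)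
      then have "N \<ge> 1 + \<bar>d u\<bar>" unfolding N_def by simp
      moreover have "N * x u \<ge> N" using x uS N1 by simp
      ultimately show ?thesis using False by (simp add: x'_def)
    qed
  qed
  have y'0: "\<forall>v\<in>T. y' v \<ge> 0" using y N1 by (simp add: y'_def)
  have "(\<Sum>u\<in>insert w S. x' u *s u) + (\<Sum>v\<in>T. y' v *s v) = 0"
  proof (subst vec_eq_iff, intro allI)
    fix i
    have si: "(\<Sum>u\<in>S. x u * u $ i) + (\<Sum>v\<in>T. y v * v $ i) = 0"
      using arg_cong[OF s, of "\<lambda>v. v $ i"] by (simp add: sum_component)
    have ri: "D * w $ i = (\<Sum>u\<in>S. d u * u $ i)"
      using arg_cong[OF rel(2), of "\<lambda>v. v $ i"] by (simp add: sum_component)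
    have eqS: "(\<Sum>u\<in>S. x' u * u $ i) = (\<Sum>u\<in>S. N * (x u * u $ i) - d u * u $ i)"
      using wS by (intro sum.cong) (auto simp: x'_def algebra_simps)
    have "((\<Sum>u\<in>insert w S. x' u *s u) + (\<Sum>v\<in>T. y' v *s v)) $ i
        = D * w $ i + (\<Sum>u\<in>S. x' u * u $ i) + (\<Sum>v\<in>T. N * y v * v $ i)"
      using fin wS by (simp add: sum_component x'_def y'_def)
    also have "\<dots> = N * ((\<Sum>u\<in>S. x u * u $ i) + (\<Sum>v\<in>T. y v * v $ i))"
      by (simp add: eqS ri sum_subtractf sum_distrib_left algebra_simps)
    also have "\<dots> = 0" using si by simp
    finally show "((\<Sum>u\<in>insert w S. x' u *s u) + (\<Sum>v\<in>T. y' v *s v)) $ i = 0 $ i" by simp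
  qed
  then show ?thesis unfolding cancellable_def using x'1 y'0 by blast
qed

lemma extend_span:
  assumes "finite S" "S1 \<subseteq> S" "rat_vec w \<in> qspan S1" "finite S1"
  shows "\<exists>c. rat_vec w = (\<Sum>u\<in>S. c u *s rat_vec u)"
proof -
  obtain c where c: "rat_vec w = (\<Sum>u\<in>S1. c u *s rat_vec u)"
    using assms(3) unfolding qspan_def by blast
  define c' where "c' u = (if u \<in> S1 then c u else 0)" for u
  have "(\<Sum>u\<in>S1. c u *s rat_vec u) = (\<Sum>u\<in>S1. c' u *s rat_vec u)"
    by (simp add: c'_def)
  also have "\<dots> = (\<Sum>u\<in>S. c' u *s rat_vec u)"
    by (rule sum.mono_neutral_left) (use assms in \<open>auto simp: c'_def\<close>)
  finally have "(\<Sum>u\<in>S1. c u *s rat_vec u) = (\<Sum>u\<in>S. c' u *s rat_vec u)" .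
  then show ?thesis using c by metis
qed

theorem mainTheorem7:
  fixes S1 S2 T :: "(int ^ 'k) set"
  assumes "finite S1" and "finite S2" and "finite T"
    and "S1 \<subseteq> S2"
    and "qspan S1 = qspan S2"
    and "cancellable S1 T"
  shows "cancellable S2 T"
proof -
  have inspan: "rat_vec w \<in> qspan S1" if "w \<in> S2" for w
  proof -
    have "(\<Sum>u\<in>S2. (if u = w then 1 else 0) *s rat_vec u) = (\<Sum>u\<in>S2. if u = w then rat_vec u else 0)"
      by (rule sum.cong) (auto simp: vec_eq_iff)
    also have "\<dots> = rat_vec w" using that assms(2) by (simp add: sum.delta)
    finally have e: "rat_vec w = (\<Sum>u\<in>S2. (if u = w then 1 else 0) *s rat_vec u)" by simp
    have "rat_vec w \<in> qspan S2" unfolding qspan_def mem_Collect_eq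
      by (rule exI[of _ "\<lambda>u. if u = w then (1::rat) else 0"], rule e)
    then show ?thesis using assms(5) by simp
  qed
  have "finite F \<Longrightarrow> F \<subseteq> S2 - S1 \<Longrightarrow> cancellable (S1 \<union> F) T" for F
  proof (induction F rule: finite_induct)
    case empty then show ?case using assms(6) by simp
  next
    case (insert a F)
    then have a: "a \<in> S2" "a \<notin> S1 \<union> F" and FF: "F \<subseteq> S2 - S1" by auto
    have fin: "finite (S1 \<union> F)" using insert assms(1) by auto
    obtain c where "rat_vec a = (\<Sum>u\<in>S1 \<union> F. c u *s rat_vec u)"
      using extend_span[OF fin _ inspan[OF a(1)] assms(1)] by blast
    then obtain D d where "D \<ge> 1" "D *s a = (\<Sum>u\<in>S1 \<union> F. d u *s u)"
      using int_rel[OF fin] by blast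
    from step[OF fin a(2) this insert.IH[OF FF]] show ?case by simp
  qed
  from this[of "S2 - S1"] show ?thesis using assms(2,4)
    by (simp add: Un_absorb1 Un_Diff_cancel)
qed

end
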